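(* Consider a finite discounted stochastic game which is a common interest game. Then for every decision maker $i\in\{1,\dots,N\}$, every $\bm{\pi}^*\in\bm{\Pi}_{\rm opt}$ and every $\tilde{\bm{\pi}}\in\bm{\Pi}\setminus\bm{\Pi}_{\rm opt}$, \[ \sum_{x\in\mathbb{X}} Q^{*i}_{\bm{\pi}^{*-i}}\big(x,\pi^{*i}(x)\big) \;<\; \sum_{x\in\mathbb{X}} Q^{*i}_{\tilde{\bm{\pi}}^{-i}}\big(x,\tilde{\pi}^{i}(x)\big). \]
   Context: A finite discounted stochastic game consists of $N\ge 1$ decision makers DM$^1,\dots,$DM$^N$; a finite state set $\mathbb{X}$; for each $i$ a finite action set $\mathbb{U}^i$, a discount factor $\beta^i\in(0,1)$ and a cost function $c^i:\mathbb{X}\times\mathbb{U}\to\mathbb{R}$, where $\mathbb{U}=\mathbb{U}^1\times\cdots\times\mathbb{U}^N$; and a transition kernel $P(\cdot\mid x,\mathbf{u})$, a probability distribution on $\mathbb{X}$ for each $(x,\mathbf{u})\in\mathbb{X}\times\mathbb{U}$. Let $\Pi^i$ be the set of all maps $\pi^i:\mathbb{X}\to\mathbb{U}^i$ (stationary deterministic policies), $\bm{\Pi}=\Pi^1\times\cdots\times\Pi^N$, $\bm{\Pi}^{-i}=\times_{j\ne i}\Pi^j$, and write $\bm{\pi}=(\pi^i,\bm{\pi}^{-i})$, $\bm{\pi}(x)=(\pi^1(x),\dots,\pi^N(x))$. For $\bm{\pi}\in\bm{\Pi}$ and $x\in\mathbb{X}$, $J^i_x(\bm{\pi})=E\big[\sum_{t\ge0}(\beta^i)^t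 c^i(x_t,\bm{\pi}(x_t))\mid x_0=x\big]$, where $x_{t+1}\sim P(\cdot\mid x_t,\bm{\pi}(x_t))$. For $\bm{\pi}^{-i}\in\bm{\Pi}^{-i}$, $Q^{*i}_{\bm{\pi}^{-i}}\in\mathbb{R}^{\mathbb{X}\times\mathbb{U}^i}$ denotes the optimal Q-factors of the MDP faced by DM$^i$ when the others use $\bm{\pi}^{-i}$, i.e. the unique solution of $Q(x,u^i)=c^i(x,u^i,\bm{\pi}^{-i}(x))+\beta^i\sum_{x'}P(x'\mid x,u^i,\bm{\pi}^{-i}(x))\min_{v\in\mathbb{U}^i}Q(x',v)$. The set of team-optimal policies is $\bm{\Pi}_{\rm opt}=\{\bm{\pi}^*\in\bm{\Pi}: J^i_x(\bm{\pi}^* )=\inf_{\bm{\pi}\in\bm{\Pi}}J^i_x(\bm{\pi})\ \forall i,\forall x\in\mathbb{X}\}$. The game is a common interest game if (i) $\bm{\Pi}_{\rm opt}\neq\emptyset$ and (ii) for every $\tilde{\bm{\pi}}\in\bm{\Pi}\setminus\bm{\Pi}_{\rm opt}$ and every $i$, $\inf_{\bm{\pi}\in\bm{\Pi}}\sum_{x\in\mathbb{X}}J^i_x(\bm{\pi})<\sum_{x\in\mathbb{X}}J^i_x(\tilde{\bm{\pi}})$. *)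

theory Defs
  imports "HOL-Probability.Probability"
begin

(* Decision makers are indexed by i \<in> {..<N}.
   States: a finite type 'x (the state set X = UNIV).
   Actions of all DMs live in one type 'u; DM i's action set is U i :: 'u set.
   A joint action is a function a :: nat \<Rightarrow> 'u (component i for DM i, i < N).
   A joint stationary deterministic policy is pol :: nat \<Rightarrow> 'x \<Rightarrow> 'u with
   pol i x \<in> U i for i < N, and (for extensionality) pol i = undefined for i \<ge> N. *)

definition joint_policies :: "nat \<Rightarrow> (nat \<Rightarrow> 'u set) \<Rightarrow> (nat \<Rightarrow> 'x \<Rightarrow> 'u) set" where
  "joint_policies N U = {pol. (\<forall>i<N. \<forall>x. pol i x \<in> U i) \<and> (\<forall>i\<ge>N. pol i = undefined)}"

definition joint_act :: "(nat \<Rightarrow> 'x \<Rightarrow> 'u) \<Rightarrow> 'x \<Rightarrow> (nat \<Rightarrow> 'u)" where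
  "joint_act pol x = (\<lambda>j. pol j x)"

fun state_dist :: "('x \<Rightarrow> (nat \<Rightarrow> 'u) \<Rightarrow> 'x pmf) \<Rightarrow> (nat \<Rightarrow> 'x \<Rightarrow> 'u) \<Rightarrow> 'x \<Rightarrow> nat \<Rightarrow> 'x pmf" where
  "state_dist P pol x 0 = return_pmf x"
| "state_dist P pol x (Suc t) = bind_pmf (state_dist P pol x t) (\<lambda>y. P y (joint_act pol y))"

definition J :: "(nat \<Rightarrow> 'x \<Rightarrow> (nat \<Rightarrow> 'u) \<Rightarrow> real) \<Rightarrow> (nat \<Rightarrow> real)
     \<Rightarrow> ('x \<Rightarrow> (nat \<Rightarrow> 'u) \<Rightarrow> 'x pmf) \<Rightarrow> nat \<Rightarrow> 'x \<Rightarrow> (nat \<Rightarrow> 'x \<Rightarrow> 'u) \<Rightarrow> real" where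
  "J c \<beta> P i x pol =
     (\<Sum>t. (\<beta> i) ^ t * measure_pmf.expectation (state_dist P pol x t) (\<lambda>y. c i y (joint_act pol y)))"

(* optimal Q-factors of the MDP faced by DM i when the others use pol^{-i}
   (the i-th component of pol is irrelevant); Q is indexed on X \<times> U^i and
   set to undefined outside U i *)
definition Qstar :: "(nat \<Rightarrow> 'u set) \<Rightarrow> (nat \<Rightarrow> 'x \<Rightarrow> (nat \<Rightarrow> 'u) \<Rightarrow> real) \<Rightarrow> (nat \<Rightarrow> real)
     \<Rightarrow> ('x::finite \<Rightarrow> (nat \<Rightarrow> 'u) \<Rightarrow> 'x pmf) \<Rightarrow> nat \<Rightarrow> (nat \<Rightarrow> 'x \<Rightarrow> 'u) \<Rightarrow> 'x \<Rightarrow> 'u \<Rightarrow> real" where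
  "Qstar U c \<beta> P i pol =
     (THE Q. (\<forall>x. \<forall>u\<in>U i.
                Q x u = c i x ((joint_act pol x)(i := u))
                        + \<beta> i * (\<Sum>x'\<in>UNIV. pmf (P x ((joint_act pol x)(i := u))) x' * Min (Q x' ` U i)))
           \<and> (\<forall>x u. u \<notin> U i \<longrightarrow> Q x u = undefined))"

definition team_opt :: "nat \<Rightarrow> (nat \<Rightarrow> 'u set) \<Rightarrow> (nat \<Rightarrow> 'x \<Rightarrow> (nat \<Rightarrow> 'u) \<Rightarrow> real) \<Rightarrow> (nat \<Rightarrow> real)
     \<Rightarrow> ('x \<Rightarrow> (nat \<Rightarrow> 'u) \<Rightarrow> 'x pmf) \<Rightarrow> (nat \<Rightarrow> 'x \<Rightarrow> 'u) set" where
  "team_opt N U c \<beta> P =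
     {pis \<in> joint_policies N U. \<forall>i<N. \<forall>x.
        J c \<beta> P i x pis = (INF pol\<in>joint_policies N U. J c \<beta> P i x pol)}"

definition common_interest :: "nat \<Rightarrow> (nat \<Rightarrow> 'u set) \<Rightarrow> (nat \<Rightarrow> 'x::finite \<Rightarrow> (nat \<Rightarrow> 'u) \<Rightarrow> real)
     \<Rightarrow> (nat \<Rightarrow> real) \<Rightarrow> ('x \<Rightarrow> (nat \<Rightarrow> 'u) \<Rightarrow> 'x pmf) \<Rightarrow> bool" where
  "common_interest N U c \<beta> P \<longleftrightarrow>
     team_opt N U c \<beta> P \<noteq> {} \<and>
     (\<forall>pit \<in> joint_policies N U - team_opt N U c \<beta> P. \<forall>i<N.
        (INF pol\<in>joint_policies N U. \<Sum>x\<in>UNIV. J c \<beta> P i x pol) < (\<Sum>x\<in>UNIV. J c \<beta> P i x pit))"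

end

theory Submission imports Defs begin


lemma exp_fin:
  fixes M :: "'x::finite pmf"
  shows "measure_pmf.expectation M f = (\<Sum>y\<in>UNIV. pmf M y * (f y::real))"
  by (subst integral_measure_pmf[where A=UNIV]) auto

lemma contr_le:
  fixes g :: "'x::finite \<Rightarrow> real"
  assumes b: "0 \<le> b" "b < 1" and h: "\<And>x. \<exists>q. g x \<le> b * (\<Sum>y\<in>UNIV. pmf q y * g y)"
  shows "g x \<le> 0"
proof -
  define D where "D = Max (range g)"
  have gD: "g y \<le> D" for y unfolding D_def by simp
  have "\<And>z. g z \<le> b * D"
  proof -
    fix z
    obtain q where q: "g z \<le> b * (\<Sum>y\<in>UNIV. pmf q y * g y)" using h by blast
    have "(\<Sum>y\<in>UNIV. pmf q y * g y) \<le> (\<Sum>y\<in>UNIV. pmf q y * D)"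
      by (rule sum_mono) (simp add: gD mult_left_mono)
    also have "\<dots> = D" by (simp add: sum_distrib_right[symmetric] sum_pmf_eq_1)
    finally show "g z \<le> b * D" using q b by (meson mult_left_mono order_trans)
  qed
  moreover have "D \<in> range g" unfolding D_def by (rule Max_in) auto
  ultimately have "D \<le> b * D" by auto
  hence "D \<le> 0" using b by (smt (verit) mult_le_cancel_right1)
  thus ?thesis using gD[of x] by simp
qed

lemma sd_first:
  "state_dist P pol x (Suc t) = bind_pmf (P x (joint_act pol x)) (\<lambda>y. state_dist P pol y t)"
proof (induction t)
  case 0 thus ?case by (simp add: bind_return_pmf bind_return_pmf')
next
  case (Suc t)
  have "state_dist P pol x (Suc (Suc t)) = bind_pmf (state_dist P pol x (Suc t)) (\<lambda>y. P y (joint_act pol y))"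
    by simp
  also have "\<dots> = bind_pmf (P x (joint_act pol x)) (\<lambda>y. state_dist P pol y (Suc t))"
    by (simp only: Suc bind_assoc_pmf) simp
  finally show ?case .
qed

lemma J_eval:
  fixes P :: "'x::finite \<Rightarrow> (nat \<Rightarrow> 'u) \<Rightarrow> 'x pmf"
  assumes b: "0 < \<beta> i" "\<beta> i < 1"
  shows "J c \<beta> P i x pol = c i x (joint_act pol x)
     + \<beta> i * (\<Sum>y\<in>UNIV. pmf (P x (joint_act pol x)) y * J c \<beta> P i y pol)"
proof -
  define C where "C y = c i y (joint_act pol y)" for y
  define E where "E t y = measure_pmf.expectation (state_dist P pol y t) C" for t y
  define Mc where "Mc = Max (range (\<lambda>y. \<bar>C y\<bar>))"
  have E0: "E 0 y = C y" for y by (simp add: E_def)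
  have ES: "E (Suc t) y = (\<Sum>z\<in>UNIV. pmf (P y (joint_act pol y)) z * E t z)" for t y
    unfolding E_def sd_first
    by (subst pmf_expectation_bind[where A=UNIV]) auto
  have Eb: "\<bar>E t y\<bar> \<le> Mc" for t y
  proof -
    have "\<bar>E t y\<bar> = \<bar>\<Sum>z\<in>UNIV. pmf (state_dist P pol y t) z * C z\<bar>"
      unfolding E_def exp_fin ..
    also have "\<dots> \<le> (\<Sum>z\<in>UNIV. \<bar>pmf (state_dist P pol y t) z * C z\<bar>)" by (rule sum_abs)
    also have "\<dots> \<le> (\<Sum>z\<in>UNIV. pmf (state_dist P pol y t) z * Mc)"
      by (rule sum_mono) (simp add: abs_mult Mc_def mult_left_mono)
    also have "\<dots> = Mc" by (simp add: sum_distrib_right[symmetric] sum_pmf_eq_1)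
    finally show ?thesis .
  qed
  have summ: "summable (\<lambda>t. \<beta> i ^ t * E t y)" for y
  proof (rule summable_comparison_test)
    show "\<exists>N. \<forall>n\<ge>N. norm (\<beta> i ^ n * E n y) \<le> Mc * \<beta> i ^ n"
      using b Eb by (auto simp: abs_mult mult.commute intro!: mult_left_mono)
    show "summable (\<lambda>n. Mc * \<beta> i ^ n)" using b by (intro summable_mult summable_geometric) auto
  qed
  have Jd: "J c \<beta> P i y pol = (\<Sum>t. \<beta> i ^ t * E t y)" for y
    unfolding J_def E_def C_def ..
  have "(\<Sum>t. \<beta> i ^ t * E t x) = \<beta> i ^ 0 * E 0 x + (\<Sum>t. \<beta> i ^ Suc t * E (Suc t) x)"
    using suminf_split_head[OF summ[of x]] by simp
  also have "(\<Sum>t. \<beta> i ^ Suc t * E (Suc t) x)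
      = (\<Sum>t. \<Sum>z\<in>UNIV. \<beta> i * (pmf (P x (joint_act pol x)) z * (\<beta> i ^ t * E t z)))"
    by (simp add: ES sum_distrib_left mult_ac)
  also have "\<dots> = (\<Sum>z\<in>UNIV. \<Sum>t. \<beta> i * (pmf (P x (joint_act pol x)) z * (\<beta> i ^ t * E t z)))"
    by (rule suminf_sum) (intro summable_mult summ)
  also have "\<dots> = (\<Sum>z\<in>UNIV. \<beta> i * (pmf (P x (joint_act pol x)) z * (\<Sum>t. \<beta> i ^ t * E t z)))"
    by (intro sum.cong refl) (simp add: suminf_mult summ summable_mult)
  finally show ?thesis unfolding Jd using E0 C_def by (simp add: sum_distrib_left)
qed


lemma ja_upd: "joint_act (pol(i:=\<sigma>)) x = (joint_act pol x)(i := \<sigma> x)"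
  by (simp add: joint_act_def fun_eq_iff)

lemma Qstar_char:
  fixes P :: "'x::finite \<Rightarrow> (nat \<Rightarrow> 'u) \<Rightarrow> 'x pmf"
  assumes fin: "finite (U i)" and ne: "U i \<noteq> {}" and b: "0 < \<beta> i" "\<beta> i < 1"
  shows "\<exists>V. (\<forall>x. \<forall>u\<in>U i. Qstar U c \<beta> P i pol x u = c i x ((joint_act pol x)(i:=u))
              + \<beta> i * (\<Sum>y\<in>UNIV. pmf (P x ((joint_act pol x)(i:=u))) y * V y))
     \<and> (\<forall>x. V x = Min (Qstar U c \<beta> P i pol x ` U i))
     \<and> (\<exists>\<sigma>. (\<forall>x. \<sigma> x \<in> U i) \<and> (\<forall>x. V x = J c \<beta> P i x (pol(i:=\<sigma>))))
     \<and> (\<forall>\<sigma>. (\<forall>x. \<sigma> x \<in> U i) \<longrightarrow> (\<forall>x. V x \<le> J c \<beta> P i x (pol(i:=\<sigma>))))"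
proof -
  define S where "S = {\<sigma>::'x \<Rightarrow> 'u. \<forall>x. \<sigma> x \<in> U i}"
  have S_eq: "S = PiE UNIV (\<lambda>_. U i)" unfolding S_def PiE_UNIV_domain by (auto simp: Pi_def)
  have finS: "finite S" unfolding S_eq by (rule finite_PiE) (auto simp: fin)
  have neS: "S \<noteq> {}"
  proof -
    have "(\<lambda>x. SOME u. u \<in> U i) \<in> S" unfolding S_def using ne by (auto intro: someI_ex)
    thus ?thesis by auto
  qed
  define A where "A x u = (joint_act pol x)(i:=u)" for x u
  define JS where "JS \<sigma> x = J c \<beta> P i x (pol(i:=\<sigma>))" for \<sigma> x
  have evalS: "JS \<sigma> x = c i x (A x (\<sigma> x)) + \<beta> i * (\<Sum>y\<in>UNIV. pmf (P x (A x (\<sigma> x))) y * JS \<sigma> y)"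
    for \<sigma> x unfolding JS_def A_def using J_eval[of \<beta> i c P x "pol(i:=\<sigma>)", OF b] by (simp add: ja_upd)
  define F where "F \<sigma> = (\<Sum>x\<in>UNIV. JS \<sigma> x)" for \<sigma>
  have "Min (F ` S) \<in> F ` S" using finS neS by (intro Min_in) auto
  then obtain \<sigma>s where \<sigma>s: "\<sigma>s \<in> S" "F \<sigma>s = Min (F ` S)" by auto
  have minF: "F \<sigma>s \<le> F \<sigma>" if "\<sigma> \<in> S" for \<sigma> using \<sigma>s finS that by simp
  define V where "V = JS \<sigma>s"
  define Q0 where "Q0 x u = (if u \<in> U i then c i x (A x u) + \<beta> i * (\<Sum>y\<in>UNIV. pmf (P x (A x u)) y * V y)
     else undefined)" for x u
  have VQ: "V x = Q0 x (\<sigma>s x)" for x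
    using \<sigma>s(1) unfolding V_def Q0_def S_def by (subst evalS) auto
  have MinV: "Min (Q0 x ` U i) = V x" for x
  proof (rule antisym)
    show "Min (Q0 x ` U i) \<le> V x" unfolding VQ using \<sigma>s(1) fin by (auto simp: S_def)
  next
    show "V x \<le> Min (Q0 x ` U i)"
    proof (rule ccontr)
      assume contra: "\<not> V x \<le> Min (Q0 x ` U i)"
      have "\<forall>z. \<exists>u. u \<in> U i \<and> Q0 z u = Min (Q0 z ` U i)"
      proof
        fix z
        have "Min (Q0 z ` U i) \<in> Q0 z ` U i" using fin ne by (intro Min_in) auto
        thus "\<exists>u. u \<in> U i \<and> Q0 z u = Min (Q0 z ` U i)" by auto
      qed
      then obtain \<sigma>' where \<sigma>': "\<And>z. \<sigma>' z \<in> U i" "\<And>z. Q0 z (\<sigma>' z) = Min (Q0 z ` U i)"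
        by metis
      have mleV: "Min (Q0 z ` U i) \<le> V z" for z
        unfolding VQ using \<sigma>s(1) fin by (auto simp: S_def)
      define g where "g z = JS \<sigma>' z - V z" for z
      have gexp: "g z = (Q0 z (\<sigma>' z) - V z) + \<beta> i * (\<Sum>y\<in>UNIV. pmf (P z (A z (\<sigma>' z))) y * g y)" for z
        unfolding g_def Q0_def using \<sigma>'(1)[of z]
        by (subst evalS) (simp add: right_diff_distrib sum_subtractf algebra_simps)
      have gle: "g z \<le> 0" for z
      proof (rule contr_le[where b="\<beta> i"])
        show "0 \<le> \<beta> i" "\<beta> i < 1" using b by auto
        fix z
        show "\<exists>q. g z \<le> \<beta> i * (\<Sum>y\<in>UNIV. pmf q y * g y)"
          using gexp[of z] \<sigma>'(2)[of z] mleV[of z] by (intro exI[of _ "P z (A z (\<sigma>' z))"]) linarith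
      qed
      have "(\<Sum>y\<in>UNIV. pmf (P x (A x (\<sigma>' x))) y * g y) \<le> 0"
        by (rule sum_nonpos) (simp add: gle mult_nonneg_nonpos)
      hence "g x < 0" using gexp[of x] \<sigma>'(2)[of x] contra b
        by (smt (verit) mult_nonneg_nonpos)
      hence "F \<sigma>' < F \<sigma>s" unfolding F_def
        by (intro sum_strict_mono_ex1) (use gle g_def V_def in auto)
      moreover have "\<sigma>' \<in> S" using \<sigma>' by (auto simp: S_def)
      ultimately show False using minF by fastforce
    qed
  qed
  let ?pred = "\<lambda>Q. (\<forall>x. \<forall>u\<in>U i.
                Q x u = c i x ((joint_act pol x)(i := u))
                        + \<beta> i * (\<Sum>x'\<in>UNIV. pmf (P x ((joint_act pol x)(i := u))) x' * Min (Q x' ` U i)))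
           \<and> (\<forall>x u. u \<notin> U i \<longrightarrow> Q x u = undefined)"
  have predQ0: "?pred Q0" unfolding MinV by (auto simp: Q0_def A_def)
  have uniq: "Q = Q0" if pQ: "?pred Q" for Q
  proof -
    define m where "m z = Min (Q z ` U i)" for z
    have Qeq: "Q z u = c i z (A z u) + \<beta> i * (\<Sum>y\<in>UNIV. pmf (P z (A z u)) y * m y)" if "u \<in> U i" for z u
      using pQ that unfolding m_def A_def by blast
    define g where "g z = \<bar>m z - V z\<bar>" for z
    have g0: "g z \<le> 0" for z
    proof (rule contr_le[where b="\<beta> i"])
      show "0 \<le> \<beta> i" "\<beta> i < 1" using b by auto
      fix z
      have key: "\<bar>\<Sum>y\<in>UNIV. pmf q y * (m y - V y)\<bar> \<le> (\<Sum>y\<in>UNIV. pmf q y * g y)" for q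
        unfolding g_def by (rule order_trans[OF sum_abs]) (simp add: abs_mult)
      have dif: "Q z u - Q0 z u = \<beta> i * (\<Sum>y\<in>UNIV. pmf (P z (A z u)) y * (m y - V y))" if "u \<in> U i" for u
        using that unfolding Qeq[OF that] Q0_def by (simp add: algebra_simps sum_subtractf)
      have "m z \<in> Q z ` U i" unfolding m_def using fin ne by (intro Min_in) auto
      then obtain u1 where u1: "u1 \<in> U i" "m z = Q z u1" by auto
      have "V z \<in> Q0 z ` U i" unfolding MinV[symmetric] using fin ne by (intro Min_in) auto
      then obtain u2 where u2: "u2 \<in> U i" "V z = Q0 z u2" by auto
      have m1: "m z \<le> Q z u2" unfolding m_def using fin u2 by auto
      have m2: "V z \<le> Q0 z u1" unfolding MinV[symmetric] using fin u1 by auto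
      show "\<exists>q. g z \<le> \<beta> i * (\<Sum>y\<in>UNIV. pmf q y * g y)"
      proof (cases "m z \<ge> V z")
        case True
        have "g z \<le> Q z u2 - Q0 z u2" unfolding g_def using True m1 u2 by simp
        also have "\<dots> \<le> \<beta> i * (\<Sum>y\<in>UNIV. pmf (P z (A z u2)) y * g y)"
          unfolding dif[OF u2(1)] using key[of "P z (A z u2)"] b
          by (smt (verit) mult_left_mono abs_le_D1)
        finally show ?thesis by blast
      next
        case False
        have "g z \<le> -(Q z u1 - Q0 z u1)" unfolding g_def using False m2 u1 by simp
        also have "\<dots> \<le> \<beta> i * (\<Sum>y\<in>UNIV. pmf (P z (A z u1)) y * g y)"
          unfolding dif[OF u1(1)] using key[of "P z (A z u1)"] b
          by (smt (verit) mult_left_mono abs_le_D2 mult_minus_right)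
        finally show ?thesis by blast
      qed
    qed
    hence "m z = V z" for z using g0[of z] unfolding g_def by simp
    thus "Q = Q0" using pQ by (auto simp: fun_eq_iff Q0_def Qeq)
  qed
  have QQ: "Qstar U c \<beta> P i pol = Q0" unfolding Qstar_def
    by (rule the_equality[where P="?pred", OF predQ0 uniq]) assumption
  show ?thesis
  proof (intro exI[of _ V] conjI allI ballI impI)
    fix x u assume "u \<in> U i"
    thus "Qstar U c \<beta> P i pol x u = c i x ((joint_act pol x)(i:=u))
              + \<beta> i * (\<Sum>y\<in>UNIV. pmf (P x ((joint_act pol x)(i:=u))) y * V y)"
      unfolding QQ Q0_def A_def by simp
  next
    fix x show "V x = Min (Qstar U c \<beta> P i pol x ` U i)" unfolding QQ MinV ..
  next
    show "\<exists>\<sigma>. (\<forall>x. \<sigma> x \<in> U i) \<and> (\<forall>x. V x = J c \<beta> P i x (pol(i:=\<sigma>)))"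
      using \<sigma>s(1) unfolding S_def V_def JS_def by blast
  next
    fix \<sigma> :: "'x \<Rightarrow> 'u" and x :: 'x assume \<sigma>: "\<forall>x. \<sigma> x \<in> U i"
    define g where "g z = V z - JS \<sigma> z" for z
    have "g x \<le> 0"
    proof (rule contr_le[where b="\<beta> i"])
      show "0 \<le> \<beta> i" "\<beta> i < 1" using b by auto
      fix z
      have "V z \<le> Q0 z (\<sigma> z)" unfolding MinV[symmetric] using fin \<sigma> by auto
      hence "g z \<le> \<beta> i * (\<Sum>y\<in>UNIV. pmf (P z (A z (\<sigma> z))) y * g y)"
        unfolding g_def Q0_def using \<sigma> evalS[of \<sigma> z]
        by (simp add: algebra_simps sum_subtractf)
      thus "\<exists>q. g z \<le> \<beta> i * (\<Sum>y\<in>UNIV. pmf q y * g y)" by blast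
    qed
    thus "V x \<le> J c \<beta> P i x (pol(i:=\<sigma>))" unfolding g_def JS_def by simp
  qed
qed


lemma jp_finite:
  assumes "\<And>i. i < N \<Longrightarrow> finite (U i)"
  shows "finite (joint_policies N U :: (nat \<Rightarrow> 'x::finite \<Rightarrow> 'u) set)"
proof -
  let ?f = "\<lambda>pol::nat \<Rightarrow> 'x \<Rightarrow> 'u. restrict pol {..<N}"
  have "?f ` joint_policies N U \<subseteq> PiE {..<N} (\<lambda>j. PiE (UNIV::'x set) (\<lambda>_. U j))"
    by (auto simp: joint_policies_def PiE_UNIV_domain)
  moreover have "finite (PiE {..<N} (\<lambda>j. PiE (UNIV::'x set) (\<lambda>_. U j)))"
    using assms by (intro finite_PiE) (auto intro: finite_PiE)
  moreover have "inj_on ?f (joint_policies N U)"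
  proof (rule inj_onI)
    fix p q assume p: "p \<in> joint_policies N U" and q: "q \<in> joint_policies N U" and e: "?f p = ?f q"
    show "p = q"
    proof
      fix j show "p j = q j"
      proof (cases "j < N")
        case True thus ?thesis using fun_cong[OF e, of j] by simp
      next
        case False thus ?thesis using p q by (simp add: joint_policies_def)
      qed
    qed
  qed
  ultimately show ?thesis using finite_imageD finite_subset by blast
qed

theorem lemma1:
  fixes N :: nat
    and U :: "nat \<Rightarrow> 'u set"
    and c :: "nat \<Rightarrow> 'x::finite \<Rightarrow> (nat \<Rightarrow> 'u) \<Rightarrow> real"
    and \<beta> :: "nat \<Rightarrow> real"
    and P :: "'x \<Rightarrow> (nat \<Rightarrow> 'u) \<Rightarrow> 'x pmf"
  assumes N: "N \<ge> 1"
    and U_fin: "\<And>i. i < N \<Longrightarrow> finite (U i)"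
    and U_ne: "\<And>i. i < N \<Longrightarrow> U i \<noteq> {}"
    and beta: "\<And>i. i < N \<Longrightarrow> 0 < \<beta> i \<and> \<beta> i < 1"
    and CI: "common_interest N U c \<beta> P"
    and i: "i < N"
    and opt: "pis \<in> team_opt N U c \<beta> P"
    and nonopt: "pit \<in> joint_policies N U - team_opt N U c \<beta> P"
  shows "(\<Sum>x\<in>UNIV. Qstar U c \<beta> P i pis x (pis i x))
           < (\<Sum>x\<in>UNIV. Qstar U c \<beta> P i pit x (pit i x))"
proof -
  let ?JP = "joint_policies N U :: (nat \<Rightarrow> 'x \<Rightarrow> 'u) set"
  have b: "0 < \<beta> i" "\<beta> i < 1" using beta[OF i] by auto
  have fin: "finite (U i)" and ne: "U i \<noteq> {}" using U_fin U_ne i by auto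
  have finJP: "finite ?JP" by (rule jp_finite) (rule U_fin)
  have pisJ: "pis \<in> ?JP" and pisopt: "\<And>x. J c \<beta> P i x pis = (INF pol\<in>?JP. J c \<beta> P i x pol)"
    using opt i unfolding team_opt_def by auto
  have pitJ: "pit \<in> ?JP" using nonopt by auto
  have upd: "pol(i:=\<sigma>) \<in> ?JP" if "pol \<in> ?JP" "\<forall>x. \<sigma> x \<in> U i" for pol \<sigma>
    using that i unfolding joint_policies_def by auto
  have lowJ: "J c \<beta> P i x pis \<le> J c \<beta> P i x pol" if "pol \<in> ?JP" for x pol
    unfolding pisopt using finJP that by (intro cINF_lower bdd_below_finite) auto
  have ja_self: "(joint_act pol x)(i := pol i x) = joint_act pol x" for pol :: "nat \<Rightarrow> 'x \<Rightarrow> 'u" and x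
    by (auto simp: joint_act_def fun_eq_iff)
  have inU: "pol i x \<in> U i" if "pol \<in> ?JP" for pol x using that i by (auto simp: joint_policies_def)
  obtain V1 where a1: "\<forall>x. \<forall>u\<in>U i. Qstar U c \<beta> P i pis x u = c i x ((joint_act pis x)(i:=u))
              + \<beta> i * (\<Sum>y\<in>UNIV. pmf (P x ((joint_act pis x)(i:=u))) y * V1 y)"
     and c1: "\<exists>\<sigma>. (\<forall>x. \<sigma> x \<in> U i) \<and> (\<forall>x. V1 x = J c \<beta> P i x (pis(i:=\<sigma>)))"
     and d1: "\<forall>\<sigma>. (\<forall>x. \<sigma> x \<in> U i) \<longrightarrow> (\<forall>x. V1 x \<le> J c \<beta> P i x (pis(i:=\<sigma>)))"
    using Qstar_char[where U=U and i=i and \<beta>=\<beta> and c=c and P=P and pol=pis, OF fin ne b] by blast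
  obtain \<sigma>1 where \<sigma>1: "\<forall>x. \<sigma>1 x \<in> U i" "\<forall>x. V1 x = J c \<beta> P i x (pis(i:=\<sigma>1))" using c1 by blast
  have V1eq: "V1 x = J c \<beta> P i x pis" for x
  proof (rule antisym)
    show "V1 x \<le> J c \<beta> P i x pis" using d1 inU[OF pisJ] by (metis fun_upd_triv)
    show "J c \<beta> P i x pis \<le> V1 x" using \<sigma>1 lowJ upd[OF pisJ] by metis
  qed
  have LHS: "Qstar U c \<beta> P i pis x (pis i x) = J c \<beta> P i x pis" for x
    using a1 inU[OF pisJ, of x] J_eval[of \<beta> i c P x pis, OF b] by (simp add: ja_self V1eq)
  obtain V2 where a2: "\<forall>x. \<forall>u\<in>U i. Qstar U c \<beta> P i pit x u = c i x ((joint_act pit x)(i:=u))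
              + \<beta> i * (\<Sum>y\<in>UNIV. pmf (P x ((joint_act pit x)(i:=u))) y * V2 y)"
     and b2: "\<forall>x. V2 x = Min (Qstar U c \<beta> P i pit x ` U i)"
     and c2: "\<exists>\<sigma>. (\<forall>x. \<sigma> x \<in> U i) \<and> (\<forall>x. V2 x = J c \<beta> P i x (pit(i:=\<sigma>)))"
    using Qstar_char[where U=U and i=i and \<beta>=\<beta> and c=c and P=P and pol=pit, OF fin ne b] by blast
  define W where "W x = Qstar U c \<beta> P i pit x (pit i x)" for x
  have WV2: "V2 x \<le> W x" for x unfolding W_def using b2 fin inU[OF pitJ] by (metis Min_le finite_imageI imageI)
  have V2J: "J c \<beta> P i x pis \<le> V2 x" for x using c2 lowJ upd[OF pitJ] by metis
  have sumlow: "(\<Sum>x\<in>UNIV. J c \<beta> P i x pis) \<le> (INF pol\<in>?JP. \<Sum>x\<in>UNIV. J c \<beta> P i x pol)"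
    using pisJ by (intro cINF_greatest sum_mono lowJ) auto
  have CIi: "(INF pol\<in>?JP. \<Sum>x\<in>UNIV. J c \<beta> P i x pol) < (\<Sum>x\<in>UNIV. J c \<beta> P i x pit)"
    using CI nonopt i unfolding common_interest_def by blast
  show ?thesis
  proof (rule ccontr)
    assume nlt: "\<not> ?thesis"
    have WJ: "W x = J c \<beta> P i x pis" for x
    proof (rule ccontr)
      assume "W x \<noteq> J c \<beta> P i x pis"
      hence "(\<Sum>x\<in>UNIV. J c \<beta> P i x pis) < (\<Sum>x\<in>UNIV. W x)"
        using WV2 V2J by (intro sum_strict_mono_ex1) (auto intro: order_trans, metis order.not_eq_order_implies_strict order_trans)
      thus False using nlt unfolding LHS W_def by simp
    qed
    have WV: "W x = V2 x" for x using WV2[of x] V2J[of x] WJ[of x] by simp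
    have Weq: "W x = c i x (joint_act pit x) + \<beta> i * (\<Sum>y\<in>UNIV. pmf (P x (joint_act pit x)) y * W y)" for x
    proof -
      have "W x = c i x (joint_act pit x) + \<beta> i * (\<Sum>y\<in>UNIV. pmf (P x (joint_act pit x)) y * V2 y)"
        using a2 inU[OF pitJ, of x] unfolding W_def by (simp add: ja_self)
      thus ?thesis by (simp add: WV)
    qed
    define g where "g x = \<bar>W x - J c \<beta> P i x pit\<bar>" for x
    have g0: "g x \<le> 0" for x
    proof (rule contr_le[where b="\<beta> i"])
      show "0 \<le> \<beta> i" "\<beta> i < 1" using b by auto
      fix z
      have "g z = \<beta> i * \<bar>\<Sum>y\<in>UNIV. pmf (P z (joint_act pit z)) y * (W y - J c \<beta> P i y pit)\<bar>"
        unfolding g_def Weq[of z] J_eval[of \<beta> i c P z pit, OF b]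
        using b by (simp add: algebra_simps sum_subtractf abs_mult flip: sum_distrib_left)
          (simp add: abs_mult flip: right_diff_distrib)
      also have "\<dots> \<le> \<beta> i * (\<Sum>y\<in>UNIV. pmf (P z (joint_act pit z)) y * g y)"
        unfolding g_def using b
        by (intro mult_left_mono order_trans[OF sum_abs]) (auto simp: abs_mult)
      finally show "\<exists>q. g z \<le> \<beta> i * (\<Sum>y\<in>UNIV. pmf q y * g y)" by blast
    qed
    have "J c \<beta> P i x pit = J c \<beta> P i x pis" for x using g0[of x] WJ[of x] unfolding g_def by simp
    thus False using sumlow CIi by simp
  qed
qed

end
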